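(* Using the principal branch of the square root, for $|z|<\ln 2$, \[ \sqrt{2e^{-z}-1}=\sum_{n=0}^{\infty}(-1)^{n+1}\Bigg[\sum_{k=0}^{n}(-1)^kS(n,k)(2k-3)!!\Bigg]\frac{z^n}{n!}, \] where $S(n,k)$ are the Stirling numbers of the second kind.
   Context: $S(n,k)$ is defined by $\frac{(e^x-1)^k}{k!}=\sum_{n\ge k}S(n,k)\frac{x^n}{n!}$, so $S(0,0)=1$ and $S(n,0)=0$ for $n\ge1$. Double factorials: $(2j-1)!!=1\cdot3\cdots(2j-1)$ for $j\ge1$. For negative odd integers, $[-(2k+1)]!!=\frac{(-1)^k}{(2k-1)!!}$ for $k\ge0$, so $(-1)!!=1$ and $(-3)!!=-1$. *)

theory Defs
  imports "HOL-Analysis.Analysis" "HOL-Combinatorics.Stirling"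
begin

text \<open>Double factorial of an odd integer m, following the paper's conventions:
  (2j-1)!! = 1*3*...*(2j-1) for j >= 1 (and (-1)!! = 1), and
  [-(2k+1)]!! = (-1)^k / (2k-1)!! for k >= 0. Only meaningful for odd m.\<close>
definition odd_dfact :: "int \<Rightarrow> real" where
  "odd_dfact m =
     (if m \<ge> -1 then (\<Prod>i = 1..nat ((m + 1) div 2). real (2 * i - 1))
      else (let k = nat ((- m - 1) div 2)
            in (-1) ^ k / (\<Prod>i = 1..k. real (2 * i - 1))))"

end

theory Submission imports Defs "HOL-Complex_Analysis.Complex_Analysis"
begin

lemma fps_exp_minus1_power_nth:
  fixes c :: "'a::field_char_0"
  shows "((fps_exp c - 1) ^ k) $ n = c ^ n * fact k * of_nat (Stirling n k) / fact n"
proof (induction k arbitrary: n)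
  case 0
  then show ?case by (cases n) auto
next
  case (Suc k)
  define P where "P = (fps_exp c - 1) ^ Suc k"
  have d: "fps_deriv P = fps_const (c * of_nat (Suc k)) * (P + (fps_exp c - 1) ^ k)"
  proof -
    have "fps_deriv P = fps_const (of_nat (Suc k)) * (fps_const c * fps_exp c) * (fps_exp c - 1) ^ k"
      unfolding P_def fps_deriv_power diff_Suc_1 by simp
    also have "\<dots> = fps_const (c * of_nat (Suc k)) * ((fps_exp c - 1) * (fps_exp c - 1) ^ k + (fps_exp c - 1) ^ k)"
      by (simp add: algebra_simps fps_const_mult[symmetric] del: fps_const_mult)
    finally show ?thesis unfolding P_def by simp
  qed
  note outer = Suc.IH
  show ?case
  proof (induction n)
    case 0
    then show ?case unfolding P_def[symmetric] by (simp add: P_def)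
  next
    case (Suc n)
    have "P $ Suc n = (fps_deriv P) $ n / of_nat (Suc n)"
      by (simp add: field_simps del: of_nat_Suc)
    also have "\<dots> = c * of_nat (Suc k) * (P $ n + ((fps_exp c - 1) ^ k) $ n) / of_nat (Suc n)"
      by (simp add: d)
    also have "\<dots> = c ^ Suc n * fact (Suc k) * of_nat (Stirling (Suc n) (Suc k)) / fact (Suc n)"
    proof -
      have a: "P $ n = c^n * fact (Suc k) * of_nat (Stirling n (Suc k)) / fact n"
        using Suc.IH unfolding P_def .
      have b: "((fps_exp c - 1)^k) $ n = c^n * fact k * of_nat (Stirling n k) / fact n"
        using outer .
      show ?thesis unfolding a b Stirling.simps(4) fact_Suc
        by (simp add: field_simps)
    qed
    finally show ?case unfolding P_def .
  qed
qed


lemma prod_odd_aux: "(\<Prod>i<Suc m. 1 - 2 * real i) = (-1) ^ m * (\<Prod>i = 1..m. real (2 * i - 1))"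
proof (induction m)
  case 0 then show ?case by simp
next
  case (Suc m)
  have "(\<Prod>i<Suc (Suc m). 1 - 2 * real i) = (\<Prod>i<Suc m. 1 - 2 * real i) * (1 - 2 * real (Suc m))"
    by simp
  also have "\<dots> = (-1) ^ Suc m * ((\<Prod>i = 1..m. real (2 * i - 1)) * real (2 * Suc m - 1))"
    unfolding Suc by (simp add: of_nat_diff algebra_simps)
  also have "\<dots> = (-1) ^ Suc m * (\<Prod>i = 1..Suc m. real (2 * i - 1))"
    by (simp add: prod.nat_ivl_Suc')
  finally show ?case .
qed

lemma prod_odd_dfact: "(\<Prod>i<k. 1 - 2 * real i) = - ((-1) ^ k * odd_dfact (2 * int k - 3))"
proof (cases k)
  case 0
  then show ?thesis by (simp add: odd_dfact_def)
next
  case (Suc m)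
  have "odd_dfact (2 * int k - 3) = (\<Prod>i = 1..m. real (2 * i - 1))"
  proof -
    have "nat ((2 * int k - 3 + 1) div 2) = m" using Suc by simp
    then show ?thesis using Suc by (simp add: odd_dfact_def)
  qed
  then show ?thesis using Suc prod_odd_aux[of m] by simp
qed

lemma half_gchoose: "((1/2::complex) gchoose k) * fact k * 2 ^ k = - ((-1) ^ k * of_real (odd_dfact (2 * int k - 3)))"
proof -
  have "((1/2::complex) gchoose k) * fact k * 2 ^ k = (\<Prod>i = 0..<k. 1/2 - of_nat i) * 2 ^ k"
    by (simp add: gbinomial_mult_fact')
  also have "\<dots> = (\<Prod>i = 0..<k. (1/2 - of_nat i) * 2)"
    by (simp only: prod.distrib prod_constant card_atLeastLessThan diff_zero)
  also have "\<dots> = (\<Prod>i = 0..<k. 1 - 2 * of_nat i)"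
    by (intro prod.cong refl) (simp add: algebra_simps)
  also have "\<dots> = of_real (\<Prod>i<k. 1 - 2 * real i)"
    by (simp add: atLeast0LessThan algebra_simps)
  also have "\<dots> = - ((-1) ^ k * of_real (odd_dfact (2 * int k - 3)))"
    unfolding prod_odd_dfact by simp
  finally show ?thesis .
qed

definition VV :: "complex fps" where "VV = fps_const 2 * (fps_exp (-1) - 1)"
definition AA :: "complex fps" where "AA = fps_binomial (1/2) oo VV"

lemma VV0: "VV $ 0 = 0" by (simp add: VV_def)

lemma AA_sq: "AA * AA = fps_const 2 * fps_exp (-1) - 1"
proof -
  have "AA * AA = (fps_binomial (1/2) * fps_binomial (1/2)) oo VV"
    unfolding AA_def by (simp add: fps_compose_mult_distrib[OF VV0])
  also have "fps_binomial (1/2) * fps_binomial (1/2) = fps_binomial (1::complex)"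
    by (simp flip: fps_binomial_add_mult)
  also have "\<dots> oo VV = 1 + VV"
    by (simp add: fps_binomial_1 fps_compose_add_distrib VV0)
  also have "1 + VV = fps_const 2 * fps_exp (-1) - 1"
    by (rule fps_ext) (simp add: VV_def)
  finally show ?thesis .
qed

lemma AA_nth: "AA $ n = (-1) ^ (n + 1)
            * of_real (\<Sum>k = 0..n. (-1) ^ k * real (Stirling n k) * odd_dfact (2 * int k - 3)) / fact n"
proof -
  have "AA $ n = (\<Sum>k = 0..n. ((1/2) gchoose k) * (VV ^ k $ n))"
    unfolding AA_def fps_compose_nth by simp
  also have "\<dots> = (\<Sum>k = 0..n. ((1/2) gchoose k) * fact k * 2 ^ k * (-1) ^ n * of_nat (Stirling n k) / fact n)"
    by (intro sum.cong refl) (simp add: VV_def power_mult_distrib fps_const_power fps_exp_minus1_power_nth)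
  also have "\<dots> = (\<Sum>k = 0..n. (-1) ^ (n + 1) * ((-1) ^ k * of_real (odd_dfact (2 * int k - 3))) * of_nat (Stirling n k) / fact n)"
    unfolding half_gchoose by (intro sum.cong refl) simp
  also have "\<dots> = (-1) ^ (n + 1)
            * of_real (\<Sum>k = 0..n. (-1) ^ k * real (Stirling n k) * odd_dfact (2 * int k - 3)) / fact n"
    by (simp add: sum_divide_distrib sum_distrib_left algebra_simps)
  finally show ?thesis .
qed


lemma not_nonpos: 
  fixes z :: complex
  assumes "norm z < ln 2"
  shows "2 * exp (- z) - 1 \<notin> \<real>\<^sub>\<le>\<^sub>0"
proof
  assume a: "2 * exp (- z) - 1 \<in> \<real>\<^sub>\<le>\<^sub>0"
  have ln2: "ln (2::real) < pi / 2"
    using ln_le_minus_one[of 2] pi_gt3 by simp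
  have "\<bar>Im z\<bar> \<le> norm z" by (rule abs_Im_le_cmod)
  hence imb: "\<bar>Im z\<bar> < pi/2" using assms ln2 by linarith
  have "\<bar>Re z\<bar> \<le> norm z" by (rule abs_Re_le_cmod)
  hence reb: "Re z < ln 2" using assms by linarith
  have cpos: "cos (Im z) > 0" using imb by (intro cos_gt_zero_pi) auto
  from a obtain t where t: "2 * exp (- z) - 1 = of_real t" "t \<le> 0"
    by (auto simp: nonpos_Reals_def)
  have "Im (2 * exp (- z) - 1) = Im (of_real t)" using t by simp
  hence im0: "Im (exp (- z)) = 0" by simp
  have "2 * Re (exp (- z)) - 1 = t" using arg_cong[OF t(1), of Re] by simp
  hence re: "2 * Re (exp (- z)) - 1 \<le> 0" using t(2) by simp
  from im0 have "sin (Im z) = 0" by (simp add: Im_exp)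
  hence "cos (Im z) ^ 2 = 1" using sin_cos_squared_add[of "Im z"] by simp
  hence "cos (Im z) = 1" using cpos by (simp add: power2_eq_1_iff)
  with re have "exp (- Re z) \<le> 1/2" by (simp add: Re_exp)
  hence "ln (exp (- Re z)) \<le> ln (1/2)" by (subst ln_le_cancel_iff) auto
  hence "- Re z \<le> ln (1/2)" by simp
  hence "Re z \<ge> ln 2" by (simp add: ln_div)
  with reb show False by simp
qed

definition ff :: "complex \<Rightarrow> complex" where "ff = (\<lambda>z. csqrt (2 * exp (- z) - 1))"

lemma ff_holo: "ff holomorphic_on ball 0 (ln 2)"
  unfolding ff_def
  by (intro holomorphic_intros) (use not_nonpos in auto)

lemma ff_exp: "ff has_fps_expansion fps_expansion ff 0"
  by (rule has_fps_expansion_fps_expansion[OF _ _ ff_holo]) auto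

lemma ff_sq_exp: "(\<lambda>z. ff z * ff z) has_fps_expansion fps_const 2 * fps_exp (-1) - 1"
proof -
  have "(\<lambda>z::complex. 2 * exp (- z) - 1) has_fps_expansion fps_const 2 * fps_exp (-1) - 1"
    by (intro fps_expansion_intros)
  moreover have "(\<lambda>z. ff z * ff z) = (\<lambda>z::complex. 2 * exp (- z) - 1)"
    by (rule ext) (simp add: ff_def power2_eq_square[symmetric])
  ultimately show ?thesis by simp
qed

lemma FF_sq: "fps_expansion ff 0 * fps_expansion ff 0 = AA * AA"
proof -
  have e1: "(\<lambda>z. ff z * ff z) has_fps_expansion fps_expansion ff 0 * fps_expansion ff 0"
    by (intro has_fps_expansion_mult ff_exp)
  have "(fps_expansion ff 0 * fps_expansion ff 0) $ n = (fps_const 2 * fps_exp (-1) - 1) $ n" for n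
    unfolding fps_nth_fps_expansion[OF e1] fps_nth_fps_expansion[OF ff_sq_exp] by (rule refl)
  thus ?thesis unfolding AA_sq by (intro fps_ext) blast
qed

lemma FF_eq: "fps_expansion ff 0 = AA"
proof -
  define F where "F = fps_expansion ff 0"
  have F0: "F $ 0 = 1" unfolding F_def fps_nth_fps_expansion[OF ff_exp] by (simp add: ff_def)
  have A0: "AA $ 0 = 1" by (simp add: AA_def)
  have "(F - AA) * (F + AA) = 0" using FF_sq unfolding F_def[symmetric] by (simp add: algebra_simps)
  moreover have "(F + AA) $ 0 \<noteq> 0" using F0 A0 by simp
  hence "F + AA \<noteq> 0" by (metis fps_zero_nth)
  ultimately have "F = AA" by simp
  thus ?thesis by (simp add: F_def)
qed

lemma ff_series: "norm z < ln 2 \<Longrightarrow> (\<lambda>n. AA $ n * z ^ n) sums ff z"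
  using holomorphic_power_series[OF ff_holo, of z]
  unfolding FF_eq[symmetric] fps_nth_fps_expansion[OF ff_exp] by simp

theorem theorem3p3:
  fixes z :: complex
  assumes "norm z < ln 2"
  shows "(\<lambda>n. (-1) ^ (n + 1)
            * of_real (\<Sum>k = 0..n. (-1) ^ k * real (Stirling n k) * odd_dfact (2 * int k - 3))
            * z ^ n / of_nat (fact n))
         sums csqrt (2 * exp (- z) - 1)"
  using ff_series[OF assms] by (simp add: AA_nth ff_def)

end
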